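(* Let $G$ be a non-discrete locally compact unimodular group with Haar measure $\nu$. For every compact set $B\subseteq G$ and every neighborhood $U$ of the identity there exist a compact set $C\supseteq B$ and a finite set $F\subseteq C$ such that $C\subseteq FU$ and for every $I\subseteq F$, $$\nu(IU\cap C)\ge \frac{|I|}{|F|}\,\nu(C).$$ *)

theory Defs
  imports "HOL-Analysis.Analysis"
begin

(* Groups are written additively: the type class topological_group_add is a
   (not necessarily commutative) group with continuous operations. *)

definition locally_compact_group :: "'a::{topological_group_add,t2_space} itself \<Rightarrow> bool" where
  "locally_compact_group _ \<longleftrightarrow>
     (\<forall>x::'a. \<exists>V K. open V \<and> compact K \<and> x \<in> V \<and> V \<subseteq> K)"

definition non_discrete :: "'a::topological_space itself \<Rightarrow> bool" where
  "non_discrete _ \<longleftrightarrow> \<not> (\<forall>x::'a. open {x})"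

definition haar_measure :: "'a::{topological_group_add,t2_space} measure \<Rightarrow> bool" where
  "haar_measure \<nu> \<longleftrightarrow>
     sets \<nu> = sets borel \<and>
     (\<forall>g A. A \<in> sets borel \<longrightarrow> emeasure \<nu> ((\<lambda>x. g + x) ` A) = emeasure \<nu> A) \<and>
     (\<forall>K. compact K \<longrightarrow> emeasure \<nu> K < \<infinity>) \<and>
     (\<forall>V. open V \<and> V \<noteq> {} \<longrightarrow> emeasure \<nu> V > 0) \<and>
     (\<forall>A \<in> sets borel. emeasure \<nu> A = (INF V\<in>{V. open V \<and> A \<subseteq> V}. emeasure \<nu> V)) \<and>
     (\<forall>V. open V \<longrightarrow> emeasure \<nu> V = (SUP K\<in>{K. compact K \<and> K \<subseteq> V}. emeasure \<nu> K))"

text \<open>Unimodular: the (left) Haar measure is also right invariant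
  (equivalently, the modular function is identically 1).\<close>
definition unimodular_haar :: "'a::{topological_group_add,t2_space} measure \<Rightarrow> bool" where
  "unimodular_haar \<nu> \<longleftrightarrow> haar_measure \<nu> \<and>
     (\<forall>g A. A \<in> sets borel \<longrightarrow> emeasure \<nu> ((\<lambda>x. x + g) ` A) = emeasure \<nu> A)"

definition setprod :: "'a::plus set \<Rightarrow> 'a set \<Rightarrow> 'a set" where
  "setprod F U = {f + u | f u. f \<in> F \<and> u \<in> U}"

end

theory Submission
  imports Defs
begin


lemma transl_eq:
  fixes x :: "'a::group_add"
  shows "(\<lambda>y. x + y) ` S = (\<lambda>y. -x + y) -` S"
proof (rule set_eqI, rule iffI)
  fix y assume "y \<in> (\<lambda>y. x + y) ` S"
  then obtain s where "s \<in> S" "y = x + s" by blast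
  thus "y \<in> (\<lambda>y. -x + y) -` S" by (simp add: add.assoc[symmetric])
next
  fix y assume "y \<in> (\<lambda>y. -x + y) -` S"
  hence "-x + y \<in> S" by simp
  moreover have "y = x + (-x + y)" by (simp add: add.assoc[symmetric])
  ultimately show "y \<in> (\<lambda>y. x + y) ` S" by blast
qed

lemma cont_transl: "continuous_on UNIV (\<lambda>y::'a::topological_group_add. c + y)"
  by (intro continuous_intros)

lemma open_transl:
  fixes S :: "'a::topological_group_add set"
  assumes "open S" shows "open ((\<lambda>y. x + y) ` S)"
  unfolding transl_eq
  using continuous_on_open_vimage[of UNIV "\<lambda>y. -x + y"] cont_transl assms by auto

lemma borel_transl:
  fixes S :: "'a::topological_group_add set"
  assumes "S \<in> sets borel" shows "(\<lambda>y. x + y) ` S \<in> sets borel"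
  unfolding transl_eq
  by (rule measurable_sets_borel[OF borel_measurable_continuous_onI[OF cont_transl] assms])

lemma compact_transl:
  fixes S :: "'a::topological_group_add set"
  assumes "compact S" shows "compact ((\<lambda>y. x + y) ` S)"
  by (rule compact_continuous_image[OF continuous_on_subset[OF cont_transl] assms]) auto

lemma nbhd_half:
  fixes U :: "'a::topological_group_add set"
  assumes "open U" "0 \<in> U"
  shows "\<exists>W. open W \<and> 0 \<in> W \<and> (\<forall>a\<in>W. -a \<in> W) \<and> (\<forall>a\<in>W. \<forall>b\<in>W. a + b \<in> U)"
proof -
  have c: "continuous_on UNIV (\<lambda>p::'a\<times>'a. fst p + snd p)"
    by (intro continuous_intros)
  have "open ((\<lambda>p::'a\<times>'a. fst p + snd p) -` U)"
    using continuous_on_open_vimage[of UNIV "\<lambda>p::'a\<times>'a. fst p + snd p"] c assms(1) by auto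
  moreover have "(0,0) \<in> (\<lambda>p::'a\<times>'a. fst p + snd p) -` U" using assms(2) by simp
  ultimately obtain A B where AB: "open A" "open B" "(0,0) \<in> A \<times> B"
      "A \<times> B \<subseteq> (\<lambda>p::'a\<times>'a. fst p + snd p) -` U"
    by (rule open_prod_elim)
  define W' where "W' = A \<inter> B"
  define W where "W = W' \<inter> uminus -` W'"
  have "open W'" using AB by (simp add: W'_def open_Int)
  have cu: "continuous_on UNIV (uminus :: 'a \<Rightarrow> 'a)" by (intro continuous_intros)
  have "open (uminus -` W')"
    using continuous_on_open_vimage[of UNIV "uminus :: 'a \<Rightarrow> 'a"] cu \<open>open W'\<close> by auto
  hence "open W" using \<open>open W'\<close> by (simp add: W_def open_Int)
  moreover have "0 \<in> W" using AB by (simp add: W_def W'_def)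
  moreover have "\<forall>a\<in>W. -a \<in> W" by (simp add: W_def)
  moreover have "\<forall>a\<in>W. \<forall>b\<in>W. a + b \<in> U" using AB(4) by (auto simp: W_def W'_def)
  ultimately show ?thesis by blast
qed

lemma open_nonempty_infinite:
  fixes O' :: "'a::{topological_group_add,t2_space} set"
  assumes nd: "non_discrete TYPE('a)" and "open O'" "O' \<noteq> {}"
  shows "infinite O'"
proof
  assume fin: "finite O'"
  obtain o' where o: "o' \<in> O'" using assms by auto
  have "closed (O' - {o'})" using fin by (simp add: finite_imp_closed)
  hence "open (O' - (O' - {o'}))" using assms(2) by (simp add: open_Diff)
  moreover have "O' - (O' - {o'}) = {o'}" using o by auto
  ultimately have oo: "open {o'}" by simp
  have "\<forall>x::'a. open {x}"
  proof
    fix x :: 'a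
    have "open ((\<lambda>y. (x + - o') + y) ` {o'})" by (rule open_transl[OF oo])
    moreover have "(\<lambda>y. (x + - o') + y) ` {o'} = {x}" by (simp add: add.assoc)
    ultimately show "open {x}" by simp
  qed
  thus False using nd unfolding non_discrete_def by simp
qed



lemma count_lemma:
  fixes q :: "nat \<Rightarrow> real" and E :: "(nat\<times>nat) set"
  assumes rho: "\<rho> < r" and qpos: "\<forall>j<r. q j > 0"
   and conn: "\<forall>A. A \<subseteq> {..<r} \<longrightarrow> A \<noteq> {} \<longrightarrow> A \<noteq> {..<r} \<longrightarrow> (\<exists>j\<in>A. \<exists>i<r. i \<notin> A \<and> (j,i) \<in> E)"
   and refl: "\<forall>j<r. (j,j) \<in> E"
  shows "\<exists>n k. n > 0 \<and> (\<forall>j<r. k j \<ge> (1::nat)) \<and> (\<Sum>j<r. k j) = n \<and>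
     (\<forall>A \<subseteq> {..<r}. real (\<Sum>j\<in>A. k j) * ((\<Sum>j<r. q j) / n) \<le> (\<Sum>i\<in>{i. i<r \<and> (\<exists>j\<in>A. (j,i)\<in>E)}. q i))"
proof -
  define tot where "tot = (\<Sum>j<r. q j)"
  define qmin where "qmin = Min (q ` {..<r})"
  have rpos: "r > 0" using rho by simp
  have qmin_le: "\<And>j. j < r \<Longrightarrow> qmin \<le> q j" unfolding qmin_def by (intro Min_le) auto
  have qmin_pos: "qmin > 0" unfolding qmin_def using qpos rpos
    by (subst Min_gr_iff) auto
  have totpos: "tot > 0" unfolding tot_def using qpos rpos
    by (intro sum_pos) auto
  define n :: nat where "n = nat \<lceil>r * tot / qmin\<rceil> + 1"
  have npos: "n > 0" by (simp add: n_def)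
  have n_ge: "real n \<ge> r * tot / qmin"
    unfolding n_def by (simp add: of_nat_add) linarith
  define m where "m = tot / n"
  have mpos: "m > 0" using totpos npos by (simp add: m_def)
  have rm_le: "r * m \<le> qmin"
  proof -
    have "r * tot \<le> n * qmin" using n_ge qmin_pos by (simp add: field_simps)
    thus ?thesis using npos by (simp add: m_def field_simps)
  qed
  have m_le_q: "\<And>j. j < r \<Longrightarrow> m \<le> q j"
  proof -
    fix j assume "j < r"
    have "m \<le> r * m" using rpos mpos by simp
    also have "\<dots> \<le> qmin" by (rule rm_le)
    also have "\<dots> \<le> q j" using qmin_le \<open>j<r\<close> by simp
    finally show "m \<le> q j" .
  qed
  have qrho: "q \<rho> > 0" using qpos rho by blast
  define R where "R = {..<r} - {\<rho>}"
  define k0 where "k0 = (\<lambda>j. nat \<lfloor>q j / m\<rfloor>)"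
  have k0_le: "\<And>j. j < r \<Longrightarrow> real (k0 j) * m \<le> q j"
  proof -
    fix j assume "j < r"
    have "q j > 0" using qpos \<open>j<r\<close> by blast
    hence "q j / m \<ge> 0" using mpos by simp
    hence "real (k0 j) \<le> q j / m" unfolding k0_def by linarith
    thus "real (k0 j) * m \<le> q j" using mpos by (simp add: field_simps)
  qed
  have k0_gt: "\<And>j. j < r \<Longrightarrow> q j < (real (k0 j) + 1) * m"
  proof -
    fix j assume "j < r"
    have "q j > 0" using qpos \<open>j<r\<close> by blast
    hence "q j / m \<ge> 0" using mpos by simp
    hence "q j / m < real (k0 j) + 1" unfolding k0_def by linarith
    thus "q j < (real (k0 j) + 1) * m" using mpos by (simp add: field_simps)
  qed
  have k0_ge1: "\<And>j. j < r \<Longrightarrow> k0 j \<ge> 1"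
  proof -
    fix j assume "j < r"
    have "1 \<le> q j / m" using m_le_q[OF \<open>j<r\<close>] mpos by simp
    thus "k0 j \<ge> 1" unfolding k0_def by linarith
  qed
  have sumR_le: "real (\<Sum>j\<in>R. k0 j) * m \<le> (\<Sum>j\<in>R. q j)"
    unfolding of_nat_sum sum_distrib_right by (rule sum_mono) (auto simp: R_def k0_le)
  have tot_split: "tot = q \<rho> + (\<Sum>j\<in>R. q j)"
    unfolding tot_def R_def using rho by (simp add: sum.remove)
  have nm: "real n * m = tot" using npos by (simp add: m_def)
  have sumR_lt: "(\<Sum>j\<in>R. k0 j) < n"
  proof -
    have "real (\<Sum>j\<in>R. k0 j) * m < real n * m"
      using sumR_le tot_split nm qrho by linarith
    hence "real (\<Sum>j\<in>R. k0 j) < real n" using mpos by (simp del: of_nat_sum)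
    thus ?thesis by linarith
  qed
  define k where "k = (\<lambda>j. if j = \<rho> then n - (\<Sum>j\<in>R. k0 j) else k0 j)"
  have sumk: "(\<Sum>j<r. k j) = n"
  proof -
    have "(\<Sum>j<r. k j) = k \<rho> + (\<Sum>j\<in>R. k j)"
      unfolding R_def using rho by (simp add: sum.remove)
    also have "(\<Sum>j\<in>R. k j) = (\<Sum>j\<in>R. k0 j)" by (rule sum.cong) (auto simp: k_def R_def)
    finally show ?thesis using sumR_lt by (simp add: k_def)
  qed
  have kge1: "\<forall>j<r. k j \<ge> 1" using k0_ge1 sumR_lt by (auto simp: k_def)
  define e where "e = real (k \<rho>) * m - q \<rho>"
  have e_eq: "e = (\<Sum>j\<in>R. q j) - real (\<Sum>j\<in>R. k0 j) * m"
  proof -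
    have "real (k \<rho>) = real n - real (\<Sum>j\<in>R. k0 j)" using sumR_lt by (simp add: k_def)
    hence "real (k \<rho>) * m = real n * m - real (\<Sum>j\<in>R. k0 j) * m" by (metis add_diff_cancel_right' left_diff_distrib)
    thus ?thesis unfolding e_def using nm tot_split by linarith
  qed
  have e_lt: "e < qmin"
  proof -
    have "(\<Sum>j\<in>R. q j) - real (\<Sum>j\<in>R. k0 j) * m = (\<Sum>j\<in>R. q j - real (k0 j) * m)"
      by (simp add: of_nat_sum sum_distrib_right sum_subtractf)
    also have "\<dots> \<le> (\<Sum>j\<in>R. m)"
      by (rule sum_mono) (use k0_gt in \<open>fastforce simp: R_def algebra_simps intro: less_imp_le\<close>)
    also have "\<dots> = real (card R) * m" by simp
    also have "\<dots> < real r * m"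
    proof -
      have "card R < r" unfolding R_def using rho by (simp add: card_Diff_singleton)
      thus ?thesis using mpos by simp
    qed
    finally show ?thesis using e_eq rm_le by linarith
  qed
  have A_bound: "\<And>A. A \<subseteq> {..<r} \<Longrightarrow> real (\<Sum>j\<in>A. k j) * m \<le> (\<Sum>j\<in>A. q j) + e"
  proof -
    fix A assume A: "A \<subseteq> {..<r}"
    have e_nn: "e \<ge> 0"
    proof -
      have "(\<Sum>j\<in>R. real (k0 j) * m) \<le> (\<Sum>j\<in>R. q j)" by (rule sum_mono) (auto simp: R_def k0_le)
      thus ?thesis using e_eq by (simp add: of_nat_sum sum_distrib_right)
    qed
    have other: "\<And>B. B \<subseteq> {..<r} \<Longrightarrow> \<rho> \<notin> B \<Longrightarrow> real (\<Sum>j\<in>B. k j) * m \<le> (\<Sum>j\<in>B. q j)"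
    proof -
      fix B assume B: "B \<subseteq> {..<r}" "\<rho> \<notin> B"
      have "real (\<Sum>j\<in>B. k j) * m = (\<Sum>j\<in>B. real (k0 j) * m)"
        by (simp add: of_nat_sum sum_distrib_right) (rule sum.cong, auto simp: k_def B)
      also have "\<dots> \<le> (\<Sum>j\<in>B. q j)" by (rule sum_mono) (use B k0_le in auto)
      finally show "real (\<Sum>j\<in>B. k j) * m \<le> (\<Sum>j\<in>B. q j)" .
    qed
    show "real (\<Sum>j\<in>A. k j) * m \<le> (\<Sum>j\<in>A. q j) + e"
    proof (cases "\<rho> \<in> A")
      case False thus ?thesis using other[OF A] e_nn by linarith
    next
      case True
      have fA: "finite A" using A finite_subset by blast
      have "real (\<Sum>j\<in>A. k j) * m = real (k \<rho>) * m + real (\<Sum>j\<in>A-{\<rho>}. k j) * m"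
        using True fA by (simp add: sum.remove algebra_simps)
      also have "\<dots> \<le> (q \<rho> + e) + (\<Sum>j\<in>A-{\<rho>}. q j)"
        using other[of "A - {\<rho>}"] A unfolding e_def by auto
      also have "\<dots> = (\<Sum>j\<in>A. q j) + e" using True fA by (simp add: sum.remove)
      finally show ?thesis .
    qed
  qed
  show ?thesis
  proof (intro exI conjI allI impI)
    show "n > 0" by (rule npos)
    show "\<And>j. j < r \<Longrightarrow> 1 \<le> k j" using kge1 by auto
    show "(\<Sum>j<r. k j) = n" by (rule sumk)
    fix A assume A: "A \<subseteq> {..<r}"
    define N where "N = {i. i<r \<and> (\<exists>j\<in>A. (j,i)\<in>E)}"
    have AN: "A \<subseteq> N" using A refl by (auto simp: N_def)
    have fN: "finite N" by (simp add: N_def)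
    have qnn: "\<And>B. B \<subseteq> {..<r} \<Longrightarrow> (\<Sum>i\<in>B. q i) \<ge> 0"
      using qpos by (intro sum_nonneg) auto
    have goal: "real (\<Sum>j\<in>A. k j) * m \<le> (\<Sum>i\<in>N. q i)"
    proof (cases "A = {}")
      case True thus ?thesis using qnn[of N] by (simp add: N_def)
    next
      case Ane: False
      show ?thesis
      proof (cases "N = {..<r}")
        case True
        have "(\<Sum>j\<in>A. k j) \<le> (\<Sum>j<r. k j)" using A by (intro sum_mono2) auto
        hence "real (\<Sum>j\<in>A. k j) \<le> real n" using sumk by (simp del: of_nat_sum)
        hence "real (\<Sum>j\<in>A. k j) * m \<le> real n * m" using mpos by (simp del: of_nat_sum)
        thus ?thesis using True nm tot_def by simp
      next
        case False
        have "A \<noteq> {..<r}" using False AN by (auto simp: N_def)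
        then obtain j i where ji: "j \<in> A" "i < r" "i \<notin> A" "(j,i) \<in> E"
          using conn A Ane by blast
        have iN: "i \<in> N" using ji by (auto simp: N_def)
        have "(\<Sum>i\<in>N. q i) = (\<Sum>i\<in>A. q i) + (\<Sum>i\<in>N - A. q i)"
          using AN fN by (metis sum.subset_diff add.commute)
        also have "(\<Sum>i\<in>N - A. q i) \<ge> q i"
        proof -
          have "(\<Sum>i\<in>N - A. q i) = q i + (\<Sum>i\<in>N - A - {i}. q i)"
            using iN ji fN by (simp add: sum.remove)
          moreover have "(\<Sum>i\<in>N - A - {i}. q i) \<ge> 0" using qnn[of "N - A - {i}"] by (auto simp: N_def)
          ultimately show ?thesis by simp
        qed
        hence "(\<Sum>i\<in>A. q i) + (\<Sum>i\<in>N - A. q i) \<ge> (\<Sum>i\<in>A. q i) + e"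
          using e_lt qmin_le[OF ji(2)] by linarith
        finally show ?thesis using A_bound[OF A] by linarith
      qed
    qed
    thus "real (\<Sum>j\<in>A. k j) * ((\<Sum>j<r. q j) / n) \<le> (\<Sum>i\<in>{i. i<r \<and> (\<exists>j\<in>A. (j,i)\<in>E)}. q i)"
      by (simp add: m_def tot_def N_def)
  qed
qed



lemma sep_exists:
  fixes D T4 T5 :: "'a::topological_group_add set"
  assumes D: "compact D" and o5: "open T5" and z5: "0 \<in> T5" and s5: "\<forall>a\<in>T5. -a \<in> T5"
   and s4: "\<forall>a\<in>T4. -a \<in> T4" and z4: "0 \<in> T4"
   and c: "\<forall>a\<in>T5. \<forall>b\<in>T5. a + b \<in> T4"
  shows "\<exists>G. finite G \<and> G \<subseteq> D \<and> (\<forall>g\<in>G. \<forall>h\<in>G. g \<noteq> h \<longrightarrow> -g + h \<notin> T4) \<and> (\<forall>y\<in>D. \<exists>g\<in>G. -g + y \<in> T4)"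
proof -
  have "D \<subseteq> (\<Union>y\<in>D. (\<lambda>z. y + z) ` T5)" using z5 by force
  then obtain Y where Y: "Y \<subseteq> D" "finite Y" "D \<subseteq> (\<Union>y\<in>Y. (\<lambda>z. y + z) ` T5)"
    using compactE_image[OF D, of D "\<lambda>y. (\<lambda>z. y + z) ` T5"] open_transl[OF o5] by metis
  define P where "P = (\<lambda>A. A \<subseteq> D \<and> finite A \<and> (\<forall>g\<in>A. \<forall>h\<in>A. g \<noteq> h \<longrightarrow> -g + h \<notin> T4))"
  have bound: "card A < card Y + 1" if "P A" for A
  proof -
    have PA: "A \<subseteq> D" "finite A" "\<forall>g\<in>A. \<forall>h\<in>A. g \<noteq> h \<longrightarrow> -g + h \<notin> T4" using that by (auto simp: P_def)
    have ex: "\<forall>a\<in>A. \<exists>y\<in>Y. -y + a \<in> T5"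
    proof
      fix a assume "a \<in> A"
      then obtain y z where "y \<in> Y" "z \<in> T5" "a = y + z" using Y(3) PA(1) by blast
      moreover have "-y + a = z" using \<open>a = y + z\<close> by (simp add: add.assoc[symmetric])
      hence "-y + a \<in> T5" using \<open>z \<in> T5\<close> by simp
      thus "\<exists>y\<in>Y. -y + a \<in> T5" using \<open>y \<in> Y\<close> by blast
    qed
    define phi where "phi = (\<lambda>a. SOME y. y \<in> Y \<and> -y + a \<in> T5)"
    have phi: "phi a \<in> Y \<and> -phi a + a \<in> T5" if "a \<in> A" for a
      unfolding phi_def using someI_ex[of "\<lambda>y. y \<in> Y \<and> -y + a \<in> T5"] ex that by blast
    have "inj_on phi A"
    proof (rule inj_onI, rule ccontr)
      fix a b assume ab: "a \<in> A" "b \<in> A" "phi a = phi b" "a \<noteq> b"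
      define y where "y = phi a"
      have 1: "-y + a \<in> T5" "-y + b \<in> T5" using phi[OF ab(1)] phi[OF ab(2)] ab(3) by (simp_all add: y_def)
      have "-(-y + a) \<in> T5" using s5 1 by blast
      hence "-(-y + a) + (-y + b) \<in> T4" using c 1 by blast
      moreover have "-(-y + a) + (-y + b) = -a + b" by (simp add: minus_add add.assoc[symmetric])
      ultimately show False using PA(3) ab by auto
    qed
    hence "card A \<le> card Y" using phi Y(2) by (intro card_inj_on_le) auto
    thus ?thesis by simp
  qed
  have "P {}" by (simp add: P_def)
  then obtain G where G: "P G" and Gmax: "\<And>A. P A \<Longrightarrow> card A \<le> card G"
    using Lattices_Big.ex_has_greatest_nat[of P "{}" card "card Y + 1"] bound by blast
  have cover: "\<forall>y\<in>D. \<exists>g\<in>G. -g + y \<in> T4"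
  proof (rule ccontr)
    assume "\<not> (\<forall>y\<in>D. \<exists>g\<in>G. -g + y \<in> T4)"
    then obtain y where y: "y \<in> D" "\<forall>g\<in>G. -g + y \<notin> T4" by blast
    have yG: "y \<notin> G" using y z4 by force
    have "P (insert y G)"
    proof -
      have "\<forall>g\<in>G. -y + g \<notin> T4"
      proof (intro ballI notI)
        fix g assume "g \<in> G" "-y + g \<in> T4"
        hence "-(-y + g) \<in> T4" using s4 by blast
        hence "-g + y \<in> T4" by (simp add: minus_add)
        thus False using y \<open>g \<in> G\<close> by blast
      qed
      thus ?thesis using G y yG unfolding P_def by auto
    qed
    hence "card (insert y G) \<le> card G" by (rule Gmax)
    moreover have "card (insert y G) = card G + 1" using G yG by (simp add: P_def)
    ultimately show False by simp
  qed
  show ?thesis using G cover unfolding P_def by blast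
qed



lemma mem_transl: "y \<in> (\<lambda>z. x + z) ` A \<longleftrightarrow> -x + (y::'a::group_add) \<in> A"
  by (simp add: transl_eq)

lemma setprod_eq: "setprod F U = (\<Union>f\<in>F. (\<lambda>z. f + z) ` U)"
  unfolding setprod_def by auto

lemma open_setprod:
  fixes U :: "'a::topological_group_add set"
  shows "open U \<Longrightarrow> open (setprod F U)"
  unfolding setprod_eq by (intro open_UN ballI open_transl)

context
  fixes \<nu> :: "'a::{topological_group_add,t2_space} measure"
  assumes haar: "haar_measure \<nu>"
begin

lemma haar_sets: "sets \<nu> = sets borel"
  using haar unfolding haar_measure_def by (rule conjunct1)

lemma haar_inv: "A \<in> sets borel \<Longrightarrow> emeasure \<nu> ((\<lambda>x. g + x) ` A) = emeasure \<nu> A"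
proof -
  have "\<forall>g A. A \<in> sets borel \<longrightarrow> emeasure \<nu> ((\<lambda>x. g + x) ` A) = emeasure \<nu> A"
    using haar unfolding haar_measure_def by (elim conjE) assumption
  thus "A \<in> sets borel \<Longrightarrow> emeasure \<nu> ((\<lambda>x. g + x) ` A) = emeasure \<nu> A" by blast
qed

lemma haar_compact_fin: "compact K \<Longrightarrow> emeasure \<nu> K < \<infinity>"
proof -
  have "\<forall>K. compact K \<longrightarrow> emeasure \<nu> K < \<infinity>"
    using haar unfolding haar_measure_def by (elim conjE) assumption
  thus "compact K \<Longrightarrow> emeasure \<nu> K < \<infinity>" by blast
qed

lemma haar_open_pos: "open V \<Longrightarrow> V \<noteq> {} \<Longrightarrow> emeasure \<nu> V > 0"
proof -
  have "\<forall>V. open V \<and> V \<noteq> {} \<longrightarrow> emeasure \<nu> V > 0"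
    using haar unfolding haar_measure_def by (elim conjE) assumption
  thus "open V \<Longrightarrow> V \<noteq> {} \<Longrightarrow> emeasure \<nu> V > 0" by blast
qed

lemma haar_fmeas: "compact K \<Longrightarrow> A \<subseteq> K \<Longrightarrow> A \<in> sets borel \<Longrightarrow> A \<in> fmeasurable \<nu>"
proof -
  assume K: "compact K" and A: "A \<subseteq> K" "A \<in> sets borel"
  have "K \<in> sets \<nu>" using K haar_sets compact_imp_closed borel_closed by auto
  hence "emeasure \<nu> A \<le> emeasure \<nu> K" using A by (intro emeasure_mono) auto
  hence "emeasure \<nu> A < \<infinity>" using haar_compact_fin[OF K] by (rule le_less_trans)
  thus ?thesis using A haar_sets by (intro fmeasurableI) auto
qed

lemma haar_fin': "compact K \<Longrightarrow> A \<subseteq> K \<Longrightarrow> A \<in> sets borel \<Longrightarrow> emeasure \<nu> A \<noteq> \<infinity>"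
proof -
  assume a: "compact K" "A \<subseteq> K" "A \<in> sets borel"
  have "emeasure \<nu> A < \<infinity>" using haar_fmeas[OF a] unfolding fmeasurable_def by simp
  thus ?thesis by simp
qed

lemma haar_pos: "open O' \<Longrightarrow> O' \<noteq> {} \<Longrightarrow> compact K \<Longrightarrow> O' \<subseteq> K \<Longrightarrow> measure \<nu> O' > 0"
proof -
  assume a: "open O'" "O' \<noteq> {}" "compact K" "O' \<subseteq> K"
  have "emeasure \<nu> O' > 0" using haar_open_pos a by blast
  moreover have "emeasure \<nu> O' \<noteq> \<infinity>" using haar_fin'[OF a(3,4)] a(1) by (simp add: borel_open)
  ultimately show ?thesis unfolding measure_def
    by (subst enn2real_positive_iff) (simp add: less_top[symmetric])
qed

lemma haar_transl: "A \<in> sets borel \<Longrightarrow> measure \<nu> ((\<lambda>y. x + y) ` A) = measure \<nu> A"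
proof -
  assume "A \<in> sets borel"
  hence "emeasure \<nu> ((\<lambda>y. x + y) ` A) = emeasure \<nu> A" by (rule haar_inv)
  thus ?thesis unfolding measure_def by simp
qed

lemma haar_mono: "A \<subseteq> B \<Longrightarrow> A \<in> sets borel \<Longrightarrow> compact K \<Longrightarrow> B \<subseteq> K \<Longrightarrow> B \<in> sets borel \<Longrightarrow> measure \<nu> A \<le> measure \<nu> B"
  by (rule measure_mono_fmeasurable) (auto simp: haar_sets intro: haar_fmeas)

end



lemma D_level:
  fixes \<nu> :: "'a::{topological_group_add,t2_space} measure" and D S U T2 T4 T5 V :: "'a set"
    and Sq :: "nat \<Rightarrow> 'a set"
  assumes haar: "haar_measure \<nu>" and nd: "non_discrete TYPE('a)"
   and D: "compact D" and S: "open S" "S \<subseteq> D" "D \<subseteq> closure S"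
   and Sq0: "Sq 0 = {0}" and SqN: "Sq N = S" and Sqmono: "\<forall>M\<le>N. Sq M \<subseteq> S"
   and Sqstep: "\<forall>M<N. \<forall>y\<in>Sq (Suc M). \<exists>z\<in>Sq M. \<exists>v\<in>V. y = z + v"
   and U: "open U"
   and o2: "open T2" "0 \<in> T2" "\<forall>a\<in>T2. -a \<in> T2"
   and o4: "open T4" "0 \<in> T4" "\<forall>a\<in>T4. -a \<in> T4"
   and o5: "open T5" "0 \<in> T5" "\<forall>a\<in>T5. -a \<in> T5"
   and V0: "0 \<in> V"
   and ca: "\<forall>a\<in>T5. \<forall>b\<in>T2. \<forall>c\<in>T4. a + (b + c) \<in> U"
   and cb: "\<forall>c\<in>T4. \<forall>v\<in>V. \<forall>c'\<in>T4. (c + v) + -c' \<in> T2"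
   and cc: "\<forall>a\<in>T5. \<forall>b\<in>T5. a + b \<in> T4"
   and T54: "T5 \<subseteq> T4"
  shows "\<exists>F. finite F \<and> F \<subseteq> D \<and> D \<subseteq> setprod F U \<and>
     (\<forall>J\<subseteq>F. measure \<nu> (setprod J U \<inter> D) \<ge> real (card J) / real (card F) * measure \<nu> D)"
proof -
  note msets = haar_sets[OF haar]
  obtain G where G: "finite G" "G \<subseteq> D" and Gsep: "\<forall>g\<in>G. \<forall>h\<in>G. g \<noteq> h \<longrightarrow> -g + h \<notin> T4"
    and Gcov: "\<forall>y\<in>D. \<exists>g\<in>G. -g + y \<in> T4"
    using sep_exists[OF D o5(1,2,3) o4(3,2) cc] by blast
  have zS: "0 \<in> S" using Sqmono Sq0 by auto
  hence zD: "0 \<in> D" using S by auto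
  define r where "r = card G"
  obtain g where g: "bij_betw g {..<r} G"
    using ex_bij_betw_nat_finite[OF G(1)] by (auto simp: r_def atLeast0LessThan)
  have gG: "\<And>j. j < r \<Longrightarrow> g j \<in> G" using g by (auto simp: bij_betw_def)
  have gD: "\<And>j. j < r \<Longrightarrow> g j \<in> D" using gG G by auto
  have ginj: "\<And>i j. i < r \<Longrightarrow> j < r \<Longrightarrow> g i = g j \<Longrightarrow> i = j"
    using g by (auto simp: bij_betw_def inj_on_def)
  have gsep: "\<And>i j. i < r \<Longrightarrow> j < r \<Longrightarrow> i \<noteq> j \<Longrightarrow> -g i + g j \<notin> T4"
    using Gsep gG ginj by metis
  have gcov: "\<And>y. y \<in> D \<Longrightarrow> \<exists>j<r. -g j + y \<in> T4"
  proof -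
    fix y assume "y \<in> D"
    then obtain h where "h \<in> G" "-h + y \<in> T4" using Gcov by blast
    moreover obtain j where "j < r" "g j = h" using g \<open>h \<in> G\<close> by (auto simp: bij_betw_def)
    ultimately show "\<exists>j<r. -g j + y \<in> T4" by blast
  qed
  obtain \<rho> where rho: "\<rho> < r" "-g \<rho> + 0 \<in> T4" using gcov[OF zD] by blast
  define tr where "tr = (\<lambda>x A. (\<lambda>z::'a. x + z) ` A)"
  have trmem: "\<And>y x A. y \<in> tr x A \<longleftrightarrow> -x + y \<in> A" by (simp add: tr_def mem_transl)
  have tropen: "\<And>x A. open A \<Longrightarrow> open (tr x A)" unfolding tr_def by (rule open_transl)
  define P where "P = (\<lambda>j. D \<inter> tr (g j) T5)"
  define O5 where "O5 = (\<Union>j<r. tr (g j) T5)"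
  define Rr where "Rr = D - O5"
  define Q where "Q = (\<lambda>j. P j \<union> (Rr \<inter> tr (g j) T4 - (\<Union>i<j. tr (g i) T4)))"
  have Dclosed: "closed D" using D by (rule compact_imp_closed)
  have Qborel: "\<And>j. Q j \<in> sets borel"
    unfolding Q_def P_def Rr_def O5_def
    using Dclosed o4(1) o5(1) tropen
    by (intro sets.Un sets.Int sets.Diff borel_open borel_closed open_UN ballI) auto
  have QD: "\<And>j. Q j \<subseteq> D" unfolding Q_def P_def Rr_def by auto
  have Qsub: "\<And>j. Q j \<subseteq> tr (g j) T4" unfolding Q_def P_def using T54 by (auto simp: trmem)
  have Pdisj: "\<And>i j. i < r \<Longrightarrow> j < r \<Longrightarrow> i \<noteq> j \<Longrightarrow> P i \<inter> P j = {}"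
  proof (rule ccontr)
    fix i j assume ij: "i < r" "j < r" "i \<noteq> j" "P i \<inter> P j \<noteq> {}"
    then obtain x where x: "-g i + x \<in> T5" "-g j + x \<in> T5" by (auto simp: P_def trmem)
    have "-g i + x + -(-g j + x) \<in> T4" using cc x o5(3) by blast
    moreover have "-g i + x + -(-g j + x) = -g i + g j" by (simp add: minus_add add.assoc)
    ultimately show False using gsep ij by auto
  qed
  have Qdisj: "disjoint_family_on Q {..<r}"
  proof (unfold disjoint_family_on_def, intro ballI impI)
    fix i j assume ij: "i \<in> {..<r}" "j \<in> {..<r}" "i \<noteq> j"
    show "Q i \<inter> Q j = {}"
    proof -
      have "P i \<inter> P j = {}" using Pdisj ij by auto
      moreover have "P i \<inter> Rr = {}" "P j \<inter> Rr = {}" using ij by (auto simp: P_def Rr_def O5_def)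
      moreover have "(tr (g i) T4 - (\<Union>k<i. tr (g k) T4)) \<inter> (tr (g j) T4 - (\<Union>k<j. tr (g k) T4)) = {}"
      proof (cases "i < j")
        case True thus ?thesis by auto
      next
        case False hence "j < i" using ij by auto
        thus ?thesis by auto
      qed
      ultimately show ?thesis unfolding Q_def by blast
    qed
  qed
  have Qcov: "(\<Union>j<r. Q j) = D"
  proof
    show "(\<Union>j<r. Q j) \<subseteq> D" using QD by auto
    show "D \<subseteq> (\<Union>j<r. Q j)"
    proof
      fix x assume xD: "x \<in> D"
      show "x \<in> (\<Union>j<r. Q j)"
      proof (cases "x \<in> O5")
        case True
        then obtain j where "j < r" "x \<in> tr (g j) T5" by (auto simp: O5_def)
        thus ?thesis using xD by (auto simp: Q_def P_def)
      next
        case False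
        define j where "j = (LEAST j. j < r \<and> -g j + x \<in> T4)"
        have ex: "\<exists>j. j < r \<and> -g j + x \<in> T4" using gcov[OF xD] by blast
        have j: "j < r" "-g j + x \<in> T4" using LeastI_ex[OF ex] by (auto simp: j_def)
        have "\<And>i. i < j \<Longrightarrow> -g i + x \<notin> T4"
        proof -
          fix i assume "i < j"
          hence "\<not> (i < r \<and> -g i + x \<in> T4)"
            using not_less_Least[of i "\<lambda>j. j < r \<and> -g j + x \<in> T4"] unfolding j_def by blast
          thus "-g i + x \<notin> T4" using \<open>i < j\<close> j(1) by auto
        qed
        hence "x \<in> Q j" using False xD j by (auto simp: Q_def Rr_def trmem)
        thus ?thesis using j by auto
      qed
    qed
  qed
  have Qfm: "\<And>j. Q j \<in> fmeasurable \<nu>" using haar_fmeas[OF haar D QD Qborel] .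
  define q where "q = (\<lambda>j. measure \<nu> (Q j))"
  have SPsub: "\<And>j. S \<inter> tr (g j) T5 \<subseteq> Q j" using S unfolding Q_def P_def by auto
  have SPne: "\<And>j. j < r \<Longrightarrow> S \<inter> tr (g j) T5 \<noteq> {}"
  proof -
    fix j assume "j < r"
    have "g j \<in> closure S" using gD[OF \<open>j<r\<close>] S by auto
    moreover have "g j \<in> tr (g j) T5" using o5 by (simp add: trmem)
    moreover have "open (tr (g j) T5)" using tropen o5 by auto
    ultimately show "S \<inter> tr (g j) T5 \<noteq> {}"
      by (metis closure_iff_nhds_not_empty inf_commute order_refl)
  qed
  have qpos: "\<forall>j<r. q j > 0"
  proof (intro allI impI)
    fix j assume "j < r"
    have op: "open (S \<inter> tr (g j) T5)" using S tropen o5 by auto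
    have "measure \<nu> (S \<inter> tr (g j) T5) > 0"
      using haar_pos[OF haar op SPne[OF \<open>j<r\<close>] D] S by auto
    also have "measure \<nu> (S \<inter> tr (g j) T5) \<le> q j"
      unfolding q_def using SPsub[of j] op QD[of j] Qborel[of j]
      by (intro haar_mono[OF haar _ _ D]) (auto simp: borel_open)
    finally show "q j > 0" .
  qed
  have totq: "measure \<nu> D = (\<Sum>j<r. q j)"
  proof -
    have "measure \<nu> (\<Union>j<r. Q j) = (\<Sum>j<r. measure \<nu> (Q j))"
      using Qborel Qdisj haar_fin'[OF haar D QD Qborel] msets
      by (intro measure_finite_Union) auto
    thus ?thesis using Qcov by (simp add: q_def)
  qed
  define E where "E = {(j,i). j < r \<and> i < r \<and> -g j + g i \<in> T2}"
  have Esym: "sym E"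
  proof (rule symI)
    fix j i assume "(j,i) \<in> E"
    hence "j < r" "i < r" "-(-g j + g i) \<in> T2" using o2(3) by (auto simp: E_def)
    moreover have "-(-g j + g i) = -g i + g j" by (simp add: minus_add)
    ultimately show "(i,j) \<in> E" by (auto simp: E_def)
  qed
  have Erefl: "\<forall>j<r. (j,j) \<in> E" using o2 by (auto simp: E_def)
  have reach: "\<And>M. M \<le> N \<Longrightarrow> \<forall>y\<in>Sq M. \<forall>i<r. -g i + y \<in> T4 \<longrightarrow> (\<rho>, i) \<in> E\<^sup>*"
  proof -
    fix M show "M \<le> N \<Longrightarrow> \<forall>y\<in>Sq M. \<forall>i<r. -g i + y \<in> T4 \<longrightarrow> (\<rho>, i) \<in> E\<^sup>*"
    proof (induction M)
      case 0
      show ?case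
      proof (intro ballI allI impI)
        fix y i assume "y \<in> Sq 0" "i < r" "-g i + y \<in> T4"
        hence i: "-g i \<in> T4" using Sq0 by simp
        have r2: "-g \<rho> \<in> T4" using rho(2) by simp
        have "(-g \<rho> + 0) + -(-g i) \<in> T2" using cb[rule_format, OF r2 V0 i] .
        hence "-g \<rho> + g i \<in> T2" by simp
        hence "(\<rho>, i) \<in> E" using rho \<open>i<r\<close> by (auto simp: E_def)
        thus "(\<rho>, i) \<in> E\<^sup>*" by auto
      qed
    next
      case (Suc M)
      show ?case
      proof (intro ballI allI impI)
        fix y i assume y: "y \<in> Sq (Suc M)" "i < r" "-g i + y \<in> T4"
        have "M < N" using Suc.prems by simp
        then obtain z v where zv: "z \<in> Sq M" "v \<in> V" "y = z + v" using Sqstep y(1) by blast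
        have "Sq M \<subseteq> S" using Sqmono \<open>M < N\<close> by simp
        hence "z \<in> D" using zv(1) S(2) by blast
        then obtain j where j: "j < r" "-g j + z \<in> T4" using gcov by blast
        have IH: "(\<rho>, j) \<in> E\<^sup>*" using Suc.IH Suc.prems zv(1) j by auto
        have "(-g j + z + v) + -(-g i + y) \<in> T2" using cb[rule_format, OF j(2) zv(2) y(3)] .
        moreover have "(-g j + z + v) + -(-g i + y) = -g j + g i"
        proof -
          have "-g j + z + v = -g j + y" using zv(3) by (simp add: add.assoc)
          moreover have "(-g j + y) + -(-g i + y) = -g j + g i" by (simp add: minus_add add.assoc)
          ultimately show ?thesis by simp
        qed
        ultimately have "(j, i) \<in> E" using j y by (auto simp: E_def)
        thus "(\<rho>, i) \<in> E\<^sup>*" using IH by auto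
      qed
    qed
  qed
  have allreach: "\<And>i. i < r \<Longrightarrow> (\<rho>, i) \<in> E\<^sup>*"
  proof -
    fix i assume "i < r"
    have "g i \<in> closure S" using gD[OF \<open>i<r\<close>] S by auto
    moreover have "g i \<in> tr (g i) T4" using o4 by (simp add: trmem)
    moreover have "open (tr (g i) T4)" using tropen o4 by auto
    ultimately have "S \<inter> tr (g i) T4 \<noteq> {}"
      by (metis closure_iff_nhds_not_empty inf_commute order_refl)
    then obtain y where "y \<in> S" "-g i + y \<in> T4" by (auto simp: trmem)
    thus "(\<rho>, i) \<in> E\<^sup>*" using reach[of N] SqN \<open>i<r\<close> by auto
  qed
  have conn: "\<forall>A. A \<subseteq> {..<r} \<longrightarrow> A \<noteq> {} \<longrightarrow> A \<noteq> {..<r} \<longrightarrow> (\<exists>j\<in>A. \<exists>i<r. i \<notin> A \<and> (j,i) \<in> E)"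
  proof (intro allI impI, rule ccontr)
    fix A assume A: "A \<subseteq> {..<r}" "A \<noteq> {}" "A \<noteq> {..<r}" "\<not> (\<exists>j\<in>A. \<exists>i<r. i \<notin> A \<and> (j,i) \<in> E)"
    obtain a where a: "a \<in> A" using A by auto
    obtain b where b: "b < r" "b \<notin> A" using A by auto
    have "(\<rho>, a) \<in> E\<^sup>*" using allreach a A by auto
    hence "(a, \<rho>) \<in> E\<^sup>*" using sym_rtrancl[OF Esym] by (auto dest: symD)
    moreover have "(\<rho>, b) \<in> E\<^sup>*" using allreach b by auto
    ultimately have ab: "(a, b) \<in> E\<^sup>*" by auto
    have "\<And>x. (a, x) \<in> E\<^sup>* \<Longrightarrow> x \<in> A"
    proof -
      fix x assume "(a, x) \<in> E\<^sup>*"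
      thus "x \<in> A"
      proof (induction rule: rtrancl_induct)
        case base thus ?case using a .
      next
        case (step y z) thus ?case using A(4) by (auto simp: E_def)
      qed
    qed
    thus False using ab b by auto
  qed
  obtain n k where nk: "n > 0" "\<forall>j<r. k j \<ge> (1::nat)" "(\<Sum>j<r. k j) = n"
    "\<forall>A \<subseteq> {..<r}. real (\<Sum>j\<in>A. k j) * ((\<Sum>j<r. q j) / n) \<le> (\<Sum>i\<in>{i. i<r \<and> (\<exists>j\<in>A. (j,i)\<in>E)}. q i)"
    using count_lemma[OF rho(1) qpos conn Erefl] by blast
  have exFc: "\<forall>j<r. \<exists>B. finite B \<and> card B = k j \<and> B \<subseteq> S \<inter> tr (g j) T5"
  proof (intro allI impI)
    fix j assume "j < r"
    have "open (S \<inter> tr (g j) T5)" using S(1) tropen[OF o5(1)] by (rule open_Int)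
    hence "infinite (S \<inter> tr (g j) T5)"
      using open_nonempty_infinite[OF nd _ SPne[OF \<open>j<r\<close>]] by blast
    thus "\<exists>B. finite B \<and> card B = k j \<and> B \<subseteq> S \<inter> tr (g j) T5" by (rule infinite_arbitrarily_large)
  qed
  then obtain Fc where Fc: "\<And>j. j < r \<Longrightarrow> finite (Fc j) \<and> card (Fc j) = k j \<and> Fc j \<subseteq> S \<inter> tr (g j) T5"
    by metis
  have FcP: "\<And>j. j < r \<Longrightarrow> Fc j \<subseteq> P j" using Fc S by (auto simp: P_def)
  have Fcdisj: "disjoint_family_on Fc {..<r}"
    unfolding disjoint_family_on_def using FcP Pdisj by (metis disjoint_iff lessThan_iff subsetD)
  define F where "F = (\<Union>j<r. Fc j)"
  have Ffin: "finite F" using Fc by (auto simp: F_def)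
  have FD: "F \<subseteq> D" using Fc S by (auto simp: F_def)
  have cardF: "card F = n"
  proof -
    have "card F = (\<Sum>j<r. card (Fc j))" unfolding F_def
      using Fc Fcdisj by (intro card_UN_disjoint) (auto simp: disjoint_family_on_def)
    also have "\<dots> = (\<Sum>j<r. k j)" using Fc by (intro sum.cong) auto
    finally show ?thesis using nk(3) by simp
  qed
  have covQ: "\<And>j i f. (j, i) \<in> E \<Longrightarrow> f \<in> Fc j \<Longrightarrow> Q i \<subseteq> setprod {f} U"
  proof
    fix j i f x assume ji: "(j, i) \<in> E" and f: "f \<in> Fc j" and x: "x \<in> Q i"
    have jr: "j < r" "i < r" and b: "-g j + g i \<in> T2" using ji by (auto simp: E_def)
    have a: "-g j + f \<in> T5" using Fc[OF jr(1)] f by (auto simp: trmem)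
    have "x \<in> tr (g i) T4" using Qsub[of i] x by blast
    hence c: "-g i + x \<in> T4" using trmem by blast
    have a': "-(-g j + f) \<in> T5" using a o5(3) by blast
    have "-(-g j + f) + ((-g j + g i) + (-g i + x)) \<in> U" using ca[rule_format, OF a' b c] .
    moreover have "-(-g j + f) + ((-g j + g i) + (-g i + x)) = -f + x"
      by (simp add: minus_add add.assoc)
    ultimately have "-f + x \<in> U" by simp
    moreover have "x = f + (-f + x)" by (simp add: add.assoc[symmetric])
    ultimately show "x \<in> setprod {f} U" unfolding setprod_def by blast
  qed
  have DF: "D \<subseteq> setprod F U"
  proof
    fix x assume "x \<in> D"
    then obtain j where j: "j < r" "x \<in> Q j" using Qcov by auto
    have "card (Fc j) \<ge> 1" using Fc[OF j(1)] nk(2) j(1) by auto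
    then obtain f where f: "f \<in> Fc j" by (metis card.empty ex_in_conv not_one_le_zero)
    have "x \<in> setprod {f} U" using covQ[OF _ f] Erefl j by blast
    moreover have "f \<in> F" using f j by (auto simp: F_def)
    ultimately show "x \<in> setprod F U" unfolding setprod_def by blast
  qed
  have Hall: "\<forall>J\<subseteq>F. measure \<nu> (setprod J U \<inter> D) \<ge> real (card J) / real (card F) * measure \<nu> D"
  proof (intro allI impI)
    fix J assume JF: "J \<subseteq> F"
    define A where "A = {j. j < r \<and> J \<inter> Fc j \<noteq> {}}"
    define Nb where "Nb = {i. i<r \<and> (\<exists>j\<in>A. (j,i)\<in>E)}"
    have Jfin: "finite J" using JF Ffin finite_subset by blast
    have cardJ: "card J \<le> (\<Sum>j\<in>A. k j)"
    proof -
      have "J = (\<Union>j<r. J \<inter> Fc j)" using JF by (auto simp: F_def)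
      hence "card J = (\<Sum>j<r. card (J \<inter> Fc j))"
      proof -
        have "card (\<Union>j<r. J \<inter> Fc j) = (\<Sum>j<r. card (J \<inter> Fc j))"
          using Jfin Fcdisj unfolding disjoint_family_on_def by (intro card_UN_disjoint) auto
        thus ?thesis using \<open>J = (\<Union>j<r. J \<inter> Fc j)\<close> by simp
      qed
      also have "\<dots> = (\<Sum>j\<in>A. card (J \<inter> Fc j))"
        by (rule sum.mono_neutral_right) (auto simp: A_def)
      also have "\<dots> \<le> (\<Sum>j\<in>A. k j)"
      proof (rule sum_mono)
        fix j assume "j \<in> A"
        hence "j < r" by (simp add: A_def)
        have "card (J \<inter> Fc j) \<le> card (Fc j)" using Fc[OF \<open>j<r\<close>] by (intro card_mono) auto
        thus "card (J \<inter> Fc j) \<le> k j" using Fc[OF \<open>j<r\<close>] by simp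
      qed
      finally show ?thesis .
    qed
    have NbQ: "(\<Union>i\<in>Nb. Q i) \<subseteq> setprod J U \<inter> D"
    proof
      fix x assume "x \<in> (\<Union>i\<in>Nb. Q i)"
      then obtain i j where ij: "i < r" "j \<in> A" "(j,i) \<in> E" "x \<in> Q i" by (auto simp: Nb_def)
      then obtain f where f: "f \<in> J" "f \<in> Fc j" by (auto simp: A_def)
      have "x \<in> setprod {f} U" using covQ[OF ij(3) f(2)] ij(4) by blast
      hence "x \<in> setprod J U" using f unfolding setprod_def by blast
      thus "x \<in> setprod J U \<inter> D" using QD ij by blast
    qed
    have NbS: "Nb \<subseteq> {..<r}" by (auto simp: Nb_def)
    have mNb: "measure \<nu> (\<Union>i\<in>Nb. Q i) = (\<Sum>i\<in>Nb. q i)"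
      unfolding q_def using Qborel Qdisj haar_fin'[OF haar D QD Qborel] msets NbS
      by (intro measure_finite_Union) (auto simp: Nb_def intro: disjoint_family_on_mono)
    have bor: "setprod J U \<inter> D \<in> sets borel"
      using open_setprod[OF U] Dclosed by (intro sets.Int borel_open borel_closed) auto
    have "(\<Sum>i\<in>Nb. q i) \<le> measure \<nu> (setprod J U \<inter> D)"
      using mNb NbQ bor haar_mono[OF haar NbQ _ D _ bor] Qborel
    proof -
      have fNb: "finite Nb" using NbS finite_subset by blast
      have "(\<Union>i\<in>Nb. Q i) \<in> sets borel" using fNb Qborel by (intro sets.finite_UN) auto
      from haar_mono[OF haar NbQ this D _ bor] mNb show ?thesis by simp
    qed
    moreover have "real (\<Sum>j\<in>A. k j) * (measure \<nu> D / n) \<le> (\<Sum>i\<in>Nb. q i)"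
    proof -
      have "A \<subseteq> {..<r}" by (auto simp: A_def)
      hence "real (\<Sum>j\<in>A. k j) * ((\<Sum>j<r. q j) / n) \<le> (\<Sum>i\<in>Nb. q i)"
        using nk(4) unfolding Nb_def by blast
      thus ?thesis using totq by simp
    qed
    moreover have "real (card J) * (measure \<nu> D / n) \<le> real (\<Sum>j\<in>A. k j) * (measure \<nu> D / n)"
      using cardJ by (intro mult_right_mono) (auto simp del: of_nat_sum)
    ultimately show "real (card J) / real (card F) * measure \<nu> D \<le> measure \<nu> (setprod J U \<inter> D)"
      using cardF by (simp add: field_simps)
  qed
  show ?thesis using Ffin FD DF Hall by blast
qed



fun Sqf :: "'a::monoid_add set \<Rightarrow> nat \<Rightarrow> 'a set" where
  "Sqf V 0 = {0}"
| "Sqf V (Suc M) = setprod (Sqf V M) V"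

lemma compact_setprod:
  fixes A B :: "'a::topological_group_add set"
  assumes "compact A" "compact B" shows "compact (setprod A B)"
proof -
  have "setprod A B = (\<lambda>p. fst p + snd p) ` (A \<times> B)" unfolding setprod_def by force
  moreover have "compact ((\<lambda>p. fst p + snd p) ` (A \<times> B))"
    by (intro compact_continuous_image compact_Times assms continuous_intros)
  ultimately show ?thesis by simp
qed

context
  fixes V :: "'a::topological_group_add set"
  assumes V0: "0 \<in> V" and Vsym: "\<forall>v\<in>V. -v \<in> V" and Vopen: "open V"
begin

lemma Sqf_Suc_mono: "Sqf V M \<subseteq> Sqf V (Suc M)"
proof
  fix x assume "x \<in> Sqf V M"
  hence "x + 0 \<in> setprod (Sqf V M) V" using V0 unfolding setprod_def by blast
  thus "x \<in> Sqf V (Suc M)" by simp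
qed

lemma Sqf_mono: "M \<le> M' \<Longrightarrow> Sqf V M \<subseteq> Sqf V M'"
  by (induction M' rule: dec_induct) (use Sqf_Suc_mono in auto)

lemma Sqf_open: "open (Sqf V (Suc M))"
  using open_setprod[OF Vopen] by simp

lemma Sqf_one: "Sqf V 1 = V"
  unfolding One_nat_def by (auto simp: setprod_def)

lemma Sqf_add: "x \<in> Sqf V a \<Longrightarrow> y \<in> Sqf V b \<Longrightarrow> x + y \<in> Sqf V (a + b)"
proof (induction b arbitrary: y)
  case 0 thus ?case by simp
next
  case (Suc b)
  then obtain y' v where "y' \<in> Sqf V b" "v \<in> V" "y = y' + v" by (auto simp: setprod_def)
  hence "x + y' \<in> Sqf V (a + b)" using Suc by blast
  hence "(x + y') + v \<in> Sqf V (Suc (a + b))" using \<open>v \<in> V\<close> by (auto simp: setprod_def)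
  thus ?case using \<open>y = y' + v\<close> by (simp add: add.assoc)
qed

lemma Sqf_neg: "x \<in> Sqf V a \<Longrightarrow> -x \<in> Sqf V a"
proof (induction a arbitrary: x)
  case 0 thus ?case by simp
next
  case (Suc a)
  then obtain x' v where "x' \<in> Sqf V a" "v \<in> V" "x = x' + v" by (auto simp: setprod_def)
  have "-v \<in> Sqf V 1" using Vsym \<open>v\<in>V\<close> Sqf_one by auto
  moreover have "-x' \<in> Sqf V a" using Suc.IH \<open>x' \<in> Sqf V a\<close> by blast
  ultimately have "-v + -x' \<in> Sqf V (1 + a)" by (rule Sqf_add)
  thus ?case using \<open>x = x' + v\<close> by (simp add: minus_add)
qed

lemma Sqf_sub_compact:
  fixes K :: "'a set"
  assumes "compact K" "V \<subseteq> K"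
  shows "\<exists>L. compact L \<and> Sqf V M \<subseteq> L"
proof (induction M)
  case 0 thus ?case by (intro exI[of _ "{0}"]) auto
next
  case (Suc M)
  then obtain L where L: "compact L" "Sqf V M \<subseteq> L" by blast
  have "compact (setprod L K)" by (rule compact_setprod[OF L(1) assms(1)])
  moreover have "Sqf V (Suc M) \<subseteq> setprod L K" using L(2) assms(2) by (auto simp: setprod_def)
  ultimately show ?case by blast
qed

lemma closure_Sqf: "closure (Sqf V M) \<subseteq> Sqf V (Suc M)"
proof
  fix x assume x: "x \<in> closure (Sqf V M)"
  have "open ((\<lambda>z. x + z) ` V)" by (rule open_transl[OF Vopen])
  moreover have "x \<in> (\<lambda>z. x + z) ` V" using V0 by force
  ultimately have "Sqf V M \<inter> (\<lambda>z. x + z) ` V \<noteq> {}"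
    using x by (metis closure_iff_nhds_not_empty order_refl)
  then obtain s v where sv: "s \<in> Sqf V M" "v \<in> V" "s = x + v" by blast
  have "x = s + -v" using sv(3) by (simp add: add.assoc)
  moreover have "-v \<in> V" using Vsym sv(2) by blast
  ultimately have "x \<in> setprod (Sqf V M) V" using sv(1) unfolding setprod_def by blast
  thus "x \<in> Sqf V (Suc M)" by simp
qed

end



lemma nbhd_sub: "0 \<in> (W::'a::monoid_add set) \<Longrightarrow> \<forall>a\<in>W. \<forall>b\<in>W. a + b \<in> X \<Longrightarrow> W \<subseteq> X"
  by (metis add.right_neutral subsetI)

theorem lemma6:
  fixes \<nu> :: "'a::{topological_group_add,t2_space} measure"
    and B U :: "'a set"
  assumes "locally_compact_group TYPE('a)"
    and "non_discrete TYPE('a)"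
    and "unimodular_haar \<nu>"
    and "compact B"
    and "open U" and "0 \<in> U"
  shows "\<exists>C F. compact C \<and> B \<subseteq> C \<and> finite F \<and> F \<subseteq> C \<and> C \<subseteq> setprod F U \<and>
           (\<forall>I. I \<subseteq> F \<longrightarrow>
              measure \<nu> (setprod I U \<inter> C) \<ge> real (card I) / real (card F) * measure \<nu> C)"
proof -
  have haar: "haar_measure \<nu>" using assms(3) unfolding unimodular_haar_def by blast
  note nd = assms(2)
  note msets = haar_sets[OF haar]
  obtain V0 K0 where VK: "open V0" "compact K0" "(0::'a) \<in> V0" "V0 \<subseteq> K0"
    using assms(1) unfolding locally_compact_group_def by blast
  obtain T1 where T1: "open T1" "0 \<in> T1" "\<forall>a\<in>T1. -a \<in> T1" "\<forall>a\<in>T1. \<forall>b\<in>T1. a + b \<in> U"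
    using nbhd_half[OF assms(5,6)] by blast
  obtain T2 where T2: "open T2" "0 \<in> T2" "\<forall>a\<in>T2. -a \<in> T2" "\<forall>a\<in>T2. \<forall>b\<in>T2. a + b \<in> T1"
    using nbhd_half[OF T1(1,2)] by blast
  obtain T3 where T3: "open T3" "0 \<in> T3" "\<forall>a\<in>T3. -a \<in> T3" "\<forall>a\<in>T3. \<forall>b\<in>T3. a + b \<in> T2"
    using nbhd_half[OF T2(1,2)] by blast
  obtain T4 where T4: "open T4" "0 \<in> T4" "\<forall>a\<in>T4. -a \<in> T4" "\<forall>a\<in>T4. \<forall>b\<in>T4. a + b \<in> T3"
    using nbhd_half[OF T3(1,2)] by blast
  obtain T5 where T5: "open T5" "0 \<in> T5" "\<forall>a\<in>T5. -a \<in> T5" "\<forall>a\<in>T5. \<forall>b\<in>T5. a + b \<in> T4"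
    using nbhd_half[OF T4(1,2)] by blast
  have s21: "T2 \<subseteq> T1" using nbhd_sub T2 by blast
  have s32: "T3 \<subseteq> T2" using nbhd_sub T3 by blast
  have s43: "T4 \<subseteq> T3" using nbhd_sub T4 by blast
  have s54: "T5 \<subseteq> T4" using nbhd_sub T5 by blast
  define V where "V = T4 \<inter> V0 \<inter> uminus -` V0"
  have cu: "continuous_on UNIV (uminus :: 'a \<Rightarrow> 'a)" by (intro continuous_intros)
  have Vopen: "open V"
  proof -
    have "open (uminus -` V0)"
      using continuous_on_open_vimage[of UNIV "uminus :: 'a \<Rightarrow> 'a"] cu VK(1) by auto
    thus ?thesis using T4(1) VK(1) by (simp add: V_def open_Int)
  qed
  have V0': "0 \<in> V" using T4 VK by (simp add: V_def)
  have Vsym: "\<forall>v\<in>V. -v \<in> V" using T4(3) by (auto simp: V_def)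
  have VK0: "V \<subseteq> K0" using VK by (auto simp: V_def)
  have V4: "V \<subseteq> T4" by (auto simp: V_def)
  have ca: "\<forall>a\<in>T5. \<forall>b\<in>T2. \<forall>c\<in>T4. a + (b + c) \<in> U"
    using T1(4) T2(4) s21 s32 s43 s54 by blast
  have cb: "\<forall>c\<in>T4. \<forall>v\<in>V. \<forall>c'\<in>T4. (c + v) + -c' \<in> T2"
    using T3(4) T4(4) T4(3) s43 V4 by blast
  have cc: "\<forall>a\<in>T5. \<forall>b\<in>T5. a + b \<in> T4" using T5(4) .
  define eqv where "eqv = (\<lambda>x y. \<exists>M. -x + y \<in> Sqf V M)"
  have eqv_refl: "\<And>x. eqv x x" unfolding eqv_def by (metis Sqf.simps(1) add.left_inverse singletonI)
  have eqv_sym: "\<And>x y. eqv x y \<Longrightarrow> eqv y x"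
  proof -
    fix x y assume "eqv x y"
    then obtain M where "-x + y \<in> Sqf V M" by (auto simp: eqv_def)
    hence "-(-x + y) \<in> Sqf V M" by (rule Sqf_neg[OF V0' Vsym Vopen])
    thus "eqv y x" by (auto simp: eqv_def minus_add)
  qed
  have eqv_trans: "\<And>x y z. eqv x y \<Longrightarrow> eqv y z \<Longrightarrow> eqv x z"
  proof -
    fix x y z assume "eqv x y" "eqv y z"
    then obtain M M' where "-x + y \<in> Sqf V M" "-y + z \<in> Sqf V M'" by (auto simp: eqv_def)
    hence "(-x + y) + (-y + z) \<in> Sqf V (M + M')" by (rule Sqf_add[OF V0' Vsym Vopen])
    thus "eqv x z" by (auto simp: eqv_def add.assoc)
  qed

  have trmem: "\<And>y x A. y \<in> (\<lambda>z::'a. x + z) ` A \<longleftrightarrow> -x + y \<in> A" by (simp add: mem_transl)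
  have "B \<subseteq> (\<Union>b\<in>B. (\<lambda>z. b + z) ` V)" using V0' by force
  then obtain X0 where X0: "X0 \<subseteq> B" "finite X0" "B \<subseteq> (\<Union>x\<in>X0. (\<lambda>z. x + z) ` V)"
    using compactE_image[OF assms(4), of B "\<lambda>b. (\<lambda>z. b + z) ` V"] open_transl[OF Vopen] by metis
  define rep where "rep = (\<lambda>x0. SOME x. x \<in> X0 \<and> eqv x x0)"
  have rep: "\<And>x0. x0 \<in> X0 \<Longrightarrow> rep x0 \<in> X0 \<and> eqv (rep x0) x0"
    unfolding rep_def by (rule someI) (use eqv_refl in blast)
  have rep_eq: "\<And>a b. eqv a b \<Longrightarrow> rep a = rep b"
  proof -
    fix a b assume "eqv a b"
    hence "\<And>x. (x \<in> X0 \<and> eqv x a) = (x \<in> X0 \<and> eqv x b)" using eqv_trans eqv_sym by blast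
    thus "rep a = rep b" unfolding rep_def by simp
  qed
  define Mx where "Mx = (\<lambda>x0. SOME M. -rep x0 + x0 \<in> Sqf V M)"
  have Mx: "\<And>x0. x0 \<in> X0 \<Longrightarrow> -rep x0 + x0 \<in> Sqf V (Mx x0)"
    unfolding Mx_def by (rule someI_ex) (use rep eqv_def in blast)
  define Nn where "Nn = Suc (Max (Mx ` X0 \<union> {0}))"
  have MxN: "\<And>x0. x0 \<in> X0 \<Longrightarrow> Mx x0 + 1 \<le> Nn"
    unfolding Nn_def using X0(2) by (simp add: Max_ge_iff)
  define X where "X = rep ` X0"
  have Xfin: "finite X" using X0 by (simp add: X_def)
  have Xdist: "\<And>x x'. x \<in> X \<Longrightarrow> x' \<in> X \<Longrightarrow> eqv x x' \<Longrightarrow> x = x'"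
  proof -
    fix x x' assume "x \<in> X" "x' \<in> X" "eqv x x'"
    then obtain a b where ab: "a \<in> X0" "b \<in> X0" "x = rep a" "x' = rep b" by (auto simp: X_def)
    have "eqv a b" using rep[OF ab(1)] rep[OF ab(2)] ab(3,4) \<open>eqv x x'\<close> eqv_sym eqv_trans by metis
    thus "x = x'" using rep_eq ab by simp
  qed
  define S where "S = Sqf V Nn"
  define D where "D = closure S"
  have Sopen: "open S" unfolding S_def Nn_def by (rule Sqf_open[OF V0' Vsym Vopen])
  obtain L where L: "compact L" "S \<subseteq> L"
    using Sqf_sub_compact[OF V0' Vsym Vopen VK(2) VK0] unfolding S_def by blast
  have DL: "D \<subseteq> L" unfolding D_def using L by (intro closure_minimal compact_imp_closed) auto
  have Dc: "compact D"
  proof -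
    have "compact (L \<inter> D)" unfolding D_def using L(1) by (intro compact_Int_closed) auto
    thus ?thesis using DL by (simp add: Int_absorb1)
  qed
  have DS: "D \<subseteq> Sqf V (Suc Nn)" unfolding D_def S_def by (rule closure_Sqf[OF V0' Vsym Vopen])
  have BC0: "B \<subseteq> (\<Union>x\<in>X. (\<lambda>z. x + z) ` S)"
  proof
    fix y assume "y \<in> B"
    then obtain x0 where x0: "x0 \<in> X0" "-x0 + y \<in> V" using X0(3) trmem by blast
    have "-x0 + y \<in> Sqf V 1" using x0 Sqf_one[OF V0' Vsym Vopen] by simp
    hence "(-rep x0 + x0) + (-x0 + y) \<in> Sqf V (Mx x0 + 1)" by (rule Sqf_add[OF V0' Vsym Vopen Mx[OF x0(1)]])
    hence "-rep x0 + y \<in> Sqf V (Mx x0 + 1)" by (simp add: add.assoc)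
    hence "-rep x0 + y \<in> S" unfolding S_def using Sqf_mono[OF V0' Vsym Vopen MxN[OF x0(1)]] by blast
    thus "y \<in> (\<Union>x\<in>X. (\<lambda>z. x + z) ` S)" using x0 trmem by (auto simp: X_def)
  qed
  obtain FD where FD: "finite FD" "FD \<subseteq> D" "D \<subseteq> setprod FD U"
    and FDH: "\<forall>J\<subseteq>FD. measure \<nu> (setprod J U \<inter> D) \<ge> real (card J) / real (card FD) * measure \<nu> D"
  proof -
    have "\<exists>F. finite F \<and> F \<subseteq> D \<and> D \<subseteq> setprod F U \<and>
     (\<forall>J\<subseteq>F. measure \<nu> (setprod J U \<inter> D) \<ge> real (card J) / real (card F) * measure \<nu> D)"
    proof (rule D_level[OF haar nd Dc Sopen _ _ _ _ _ _ assms(5) T2(1,2,3) T4(1,2,3) T5(1,2,3) V0' ca cb cc s54,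
          where Sq = "Sqf V" and N = Nn])
      show "S \<subseteq> D" unfolding D_def by (rule closure_subset)
      show "D \<subseteq> closure S" unfolding D_def by simp
      show "Sqf V 0 = {0}" by simp
      show "Sqf V Nn = S" by (simp add: S_def)
      show "\<forall>M\<le>Nn. Sqf V M \<subseteq> S" unfolding S_def using Sqf_mono[OF V0' Vsym Vopen] by blast
      show "\<forall>M<Nn. \<forall>y\<in>Sqf V (Suc M). \<exists>z\<in>Sqf V M. \<exists>v\<in>V. y = z + v"
        by (auto simp: setprod_def)
    qed
    thus ?thesis using that by blast
  qed

  define tr where "tr = (\<lambda>x A. (\<lambda>z::'a. x + z) ` A)"
  have trm: "\<And>y x A. y \<in> tr x A \<longleftrightarrow> -x + y \<in> A" by (simp add: tr_def mem_transl)
  define C where "C = (\<Union>x\<in>X. tr x D)"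
  define F where "F = (\<Union>x\<in>X. tr x FD)"
  have disj: "\<And>x x'. x \<in> X \<Longrightarrow> x' \<in> X \<Longrightarrow> x \<noteq> x' \<Longrightarrow> tr x D \<inter> tr x' D = {}"
  proof (rule ccontr)
    fix x x' assume xx: "x \<in> X" "x' \<in> X" "x \<noteq> x'" "tr x D \<inter> tr x' D \<noteq> {}"
    then obtain y where y: "-x + y \<in> D" "-x' + y \<in> D" by (auto simp: trm)
    have a: "-x + y \<in> Sqf V (Suc Nn)" using y DS by blast
    have "-(-x' + y) \<in> Sqf V (Suc Nn)" using y DS Sqf_neg[OF V0' Vsym Vopen] by blast
    hence "(-x + y) + -(-x' + y) \<in> Sqf V (Suc Nn + Suc Nn)" by (rule Sqf_add[OF V0' Vsym Vopen a])
    moreover have "(-x + y) + -(-x' + y) = -x + x'" by (simp add: minus_add add.assoc)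
    ultimately have "-x + x' \<in> Sqf V (Suc Nn + Suc Nn)" by simp
    hence "eqv x x'" unfolding eqv_def by blast
    thus False using Xdist xx by blast
  qed
  have disjfam: "disjoint_family_on (\<lambda>x. tr x D) X"
    unfolding disjoint_family_on_def using disj by blast
  have trc: "\<And>x. compact (tr x D)" unfolding tr_def by (rule compact_transl[OF Dc])
  have Dborel: "D \<in> sets borel" using Dc by (intro borel_closed compact_imp_closed)
  have trb: "\<And>x. tr x D \<in> sets borel" unfolding tr_def by (rule borel_transl[OF Dborel])
  have Cc: "compact C" unfolding C_def by (rule compact_UN[OF Xfin trc])
  have BC: "B \<subseteq> C"
  proof -
    have "S \<subseteq> D" unfolding D_def by (rule closure_subset)
    show ?thesis
    proof
      fix y assume "y \<in> B"
      then obtain x where x: "x \<in> X" "y \<in> (\<lambda>z. x + z) ` S" using BC0 by blast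
      hence "y \<in> tr x D" using \<open>S \<subseteq> D\<close> unfolding tr_def by blast
      thus "y \<in> C" using x(1) unfolding C_def by blast
    qed
  qed
  have Ffin: "finite F" unfolding F_def tr_def using Xfin FD(1) by simp
  have trFD: "\<And>x. tr x FD \<subseteq> tr x D" unfolding tr_def using FD(2) by (rule image_mono)
  have FC: "F \<subseteq> C" unfolding F_def C_def using trFD by blast
  have CF: "C \<subseteq> setprod F U"
  proof
    fix y assume "y \<in> C"
    then obtain x where x: "x \<in> X" "-x + y \<in> D" by (auto simp: C_def trm)
    then obtain f u where fu: "f \<in> FD" "u \<in> U" "-x + y = f + u" using FD(3) unfolding setprod_def by blast
    have "y = x + (-x + y)" by (simp add: add.assoc[symmetric])
    also have "\<dots> = x + (f + u)" using fu(3) by simp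
    finally have "y = (x + f) + u" by (simp add: add.assoc)
    moreover have "x + f \<in> F" using x fu by (auto simp: F_def tr_def)
    ultimately show "y \<in> setprod F U" using fu unfolding setprod_def by blast
  qed
  have inj: "\<And>x A. inj_on (\<lambda>z::'a. x + z) A" by (auto simp: inj_on_def)
  have cardF: "card F = card X * card FD"
  proof -
    have "card F = (\<Sum>x\<in>X. card (tr x FD))" unfolding F_def
    proof (rule card_UN_disjoint[OF Xfin])
      show "\<forall>i\<in>X. finite (tr i FD)" using FD(1) by (simp add: tr_def)
      show "\<forall>i\<in>X. \<forall>j\<in>X. i \<noteq> j \<longrightarrow> tr i FD \<inter> tr j FD = {}"
      proof (intro ballI impI)
        fix i j assume "i \<in> X" "j \<in> X" "i \<noteq> j"
        hence "tr i D \<inter> tr j D = {}" by (rule disj)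
        thus "tr i FD \<inter> tr j FD = {}" using trFD[of i] trFD[of j] by blast
      qed
    qed
    also have "\<dots> = (\<Sum>x\<in>X. card FD)" using inj by (simp add: tr_def card_image)
    finally show ?thesis by simp
  qed
  have mC: "measure \<nu> C = card X * measure \<nu> D"
  proof -
    have "measure \<nu> C = (\<Sum>x\<in>X. measure \<nu> (tr x D))" unfolding C_def
      using Xfin trb disjfam haar_fin'[OF haar trc order_refl trb] msets
      by (intro measure_finite_Union) auto
    also have "\<dots> = (\<Sum>x\<in>X. measure \<nu> D)" using haar_transl[OF haar Dborel] by (simp add: tr_def)
    finally show ?thesis by simp
  qed
  have Hall: "\<forall>I. I \<subseteq> F \<longrightarrow> measure \<nu> (setprod I U \<inter> C) \<ge> real (card I) / real (card F) * measure \<nu> C"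
  proof (intro allI impI)
    fix I assume IF: "I \<subseteq> F"
    define Ix where "Ix = (\<lambda>x. I \<inter> tr x FD)"
    define Jx where "Jx = (\<lambda>x. (\<lambda>z. -x + z) ` Ix x)"
    define Wx where "Wx = (\<lambda>x. tr x (setprod (Jx x) U \<inter> D))"
    have Ifin: "finite I" using IF Ffin finite_subset by blast
    have JxFD: "\<And>x. Jx x \<subseteq> FD" by (auto simp: Jx_def Ix_def trm)
    have cardJ: "\<And>x. card (Jx x) = card (Ix x)"
      unfolding Jx_def using inj by (simp add: card_image)
    have cardI: "card I = (\<Sum>x\<in>X. card (Ix x))"
    proof -
      have "I = (\<Union>x\<in>X. Ix x)" using IF by (auto simp: F_def Ix_def)
      moreover have "card (\<Union>x\<in>X. Ix x) = (\<Sum>x\<in>X. card (Ix x))"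
      proof (rule card_UN_disjoint[OF Xfin])
        show "\<forall>i\<in>X. finite (Ix i)" using Ifin by (simp add: Ix_def)
        show "\<forall>i\<in>X. \<forall>j\<in>X. i \<noteq> j \<longrightarrow> Ix i \<inter> Ix j = {}"
        proof (intro ballI impI)
          fix i j assume "i \<in> X" "j \<in> X" "i \<noteq> j"
          hence "tr i D \<inter> tr j D = {}" by (rule disj)
          thus "Ix i \<inter> Ix j = {}" using trFD[of i] trFD[of j] unfolding Ix_def by blast
        qed
      qed
      ultimately show ?thesis by simp
    qed
    have WxD: "\<And>x. Wx x \<subseteq> tr x D" unfolding Wx_def tr_def by blast
    have Wxb: "\<And>x. setprod (Jx x) U \<inter> D \<in> sets borel"
      using borel_open[OF open_setprod[OF assms(5)]] Dborel by (rule sets.Int)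
    have Wxborel: "\<And>x. Wx x \<in> sets borel" unfolding Wx_def tr_def by (rule borel_transl[OF Wxb])
    have WxI: "\<And>x. x \<in> X \<Longrightarrow> Wx x \<subseteq> setprod I U \<inter> C"
    proof
      fix x y assume x: "x \<in> X" and y: "y \<in> Wx x"
      then obtain w where w: "w \<in> setprod (Jx x) U" "w \<in> D" "y = x + w" by (auto simp: Wx_def tr_def)
      then obtain j u where ju: "j \<in> Jx x" "u \<in> U" "w = j + u" unfolding setprod_def by blast
      then obtain i where i: "i \<in> Ix x" "j = -x + i" by (auto simp: Jx_def)
      have "y = i + u" using w(3) ju(3) i(2) by (simp add: add.assoc[symmetric])
      moreover have "i \<in> I" using i by (simp add: Ix_def)
      ultimately have "y \<in> setprod I U" using ju(2) unfolding setprod_def by blast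
      moreover have "y \<in> C" using x WxD y by (auto simp: C_def)
      ultimately show "y \<in> setprod I U \<inter> C" by blast
    qed
    have Wfm: "\<And>x. emeasure \<nu> (Wx x) \<noteq> \<infinity>"
      using haar_fin'[OF haar trc WxD Wxborel] .
    have Wdisj: "disjoint_family_on Wx X"
    proof (unfold disjoint_family_on_def, intro ballI impI)
      fix i j assume "i \<in> X" "j \<in> X" "i \<noteq> j"
      hence "tr i D \<inter> tr j D = {}" by (rule disj)
      thus "Wx i \<inter> Wx j = {}" using WxD[of i] WxD[of j] by blast
    qed
    have mW: "measure \<nu> (\<Union>x\<in>X. Wx x) = (\<Sum>x\<in>X. measure \<nu> (setprod (Jx x) U \<inter> D))"
    proof -
      have "measure \<nu> (\<Union>x\<in>X. Wx x) = (\<Sum>x\<in>X. measure \<nu> (Wx x))"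
        using Xfin Wxborel Wdisj Wfm msets by (intro measure_finite_Union) auto
      also have "\<dots> = (\<Sum>x\<in>X. measure \<nu> (setprod (Jx x) U \<inter> D))"
        unfolding Wx_def tr_def using haar_transl[OF haar Wxb] by simp
      finally show ?thesis .
    qed
    have borI: "setprod I U \<inter> C \<in> sets borel"
      using open_setprod[OF assms(5)] Cc by (intro sets.Int borel_open borel_closed compact_imp_closed) auto
    have "(\<Union>x\<in>X. Wx x) \<in> sets borel" using Xfin Wxborel by (intro sets.finite_UN) auto
    hence le1: "measure \<nu> (\<Union>x\<in>X. Wx x) \<le> measure \<nu> (setprod I U \<inter> C)"
      using WxI by (intro haar_mono[OF haar _ _ Cc _ borI]) auto
    have le2: "(\<Sum>x\<in>X. real (card (Ix x)) / real (card FD) * measure \<nu> D) \<le> measure \<nu> (\<Union>x\<in>X. Wx x)"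
    proof (unfold mW, rule sum_mono)
      fix x assume "x \<in> X"
      have "real (card (Jx x)) / real (card FD) * measure \<nu> D \<le> measure \<nu> (setprod (Jx x) U \<inter> D)"
        using FDH JxFD[of x] by blast
      thus "real (card (Ix x)) / real (card FD) * measure \<nu> D \<le> measure \<nu> (setprod (Jx x) U \<inter> D)"
        using cardJ[of x] by simp
    qed
    have eq: "(\<Sum>x\<in>X. real (card (Ix x)) / real (card FD) * measure \<nu> D) = real (card I) / real (card FD) * measure \<nu> D"
      using cardI by (simp add: sum_distrib_right sum_divide_distrib)
    show "real (card I) / real (card F) * measure \<nu> C \<le> measure \<nu> (setprod I U \<inter> C)"
    proof (cases "card X = 0")
      case True thus ?thesis using mC by simp
    next
      case False
      have "real (card I) / real (card F) * measure \<nu> C = real (card I) / real (card FD) * measure \<nu> D"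
        using False by (simp add: cardF mC)
      thus ?thesis using le1 le2 eq by linarith
    qed
  qed
  show ?thesis using Cc BC Ffin FC CF Hall by blast
qed

end
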